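(* Let $q$ be a power of a prime $p$. Let $a,d$ be positive integers and $s\ge1$ such that $L=\{a,a+d,\ldots,a+(s-1)d\}\subseteq[q-1]$. Let $\mathcal{F}\subseteq 2^{[n]}$ be $q$-modular $L$-differencing Sperner. If $$\sum_{\ell\in L}v_p(\ell)<\max\{(s-1)v_p(d)+v_p(q),\; s\,v_p(d)+v_p(s!)+1\},$$ then $|\mathcal{F}|\le\sum_{i=0}^{s}\binom{n}{i}$.
   Context: $[n]=\{1,\ldots,n\}$, $[q-1]=\{1,\ldots,q-1\}$, and $2^{[n]}$ is the family of all subsets of $[n]$. For a prime $p$ and integer $m$, $v_p(m)$ is the largest nonnegative integer $k$ with $p^k\mid m$ ($v_p(0)=+\infty$). For a positive integer $m$ and $L\subseteq\mathbb{Z}$, write $r\in L\pmod m$ if $r\equiv\ell\pmod m$ for some $\ell\in L$. For $L\subseteq[q-1]$, a family $\mathcal{F}\subseteq 2^{[n]}$ is $q$-modular $L$-differencing Sperner if $|A\setminus B|\in L\pmod q$ for all distinct $A,B\in\mathcal{F}$. *)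

theory Defs
  imports "HOL-Computational_Algebra.Computational_Algebra" "HOL-Number_Theory.Number_Theory"
begin

text \<open>The p-adic valuation v_p(m) for positive m is the library's multiplicity p m.\<close>

definition in_mod :: "nat \<Rightarrow> nat set \<Rightarrow> nat \<Rightarrow> bool" where
  "in_mod r L m \<longleftrightarrow> (\<exists>l\<in>L. [r = l] (mod m))"

definition modular_L_differencing_sperner ::
  "nat \<Rightarrow> nat \<Rightarrow> nat set \<Rightarrow> nat set set \<Rightarrow> bool" where
  "modular_L_differencing_sperner n q L F \<longleftrightarrow>
     F \<subseteq> Pow {1..n} \<and>
     (\<forall>A\<in>F. \<forall>B\<in>F. A \<noteq> B \<longrightarrow> in_mod (card (A - B)) L q)"

end

theory Submission
  imports Defs "HOL-Library.Function_Algebras"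
begin


lemma prime_dvd_choose_pow:
  fixes p m j :: nat
  assumes "prime p" "0 < j" "j < p ^ m"
  shows "p dvd (p ^ m choose j)"
proof (rule ccontr)
  assume nd: "\<not> p dvd (p ^ m choose j)"
  have m: "m > 0" using assms by (cases m) auto
  have eq: "j * (p ^ m choose j) = p ^ m * (p ^ m - 1 choose (j - 1))"
    using assms(2) times_binomial_minus1_eq by blast
  have "coprime (p ^ m) (p ^ m choose j)"
    using nd assms(1) by (simp add: prime_imp_coprime coprime_commute)
  moreover have "p ^ m dvd j * (p ^ m choose j)" using eq by simp
  ultimately have "p ^ m dvd j" using coprime_dvd_mult_left_iff by blast
  then show False using assms(2,3) by (meson dvd_imp_le not_le)
qed



lemma prime_dvd_choose_shift:
  fixes p m i s t :: nat
  assumes "prime p" "i < s" "s < p ^ m"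
  shows "p dvd ((p ^ m * t + i) choose s)"
proof (induction t)
  case 0
  then show ?case using assms(2) by (simp add: binomial_eq_0)
next
  case (Suc t)
  define w where "w = p ^ m * t + i"
  have "(p ^ m * Suc t + i) choose s = (p ^ m + w) choose s" by (simp add: w_def add.assoc)
  also have "\<dots> = (\<Sum>j\<le>s. (p ^ m choose j) * (w choose (s - j)))"
    by (simp add: vandermonde)
  also have "p dvd \<dots>"
  proof (rule dvd_sum)
    fix j assume j: "j \<in> {..s}"
    show "p dvd (p ^ m choose j) * (w choose (s - j))"
    proof (cases "j = 0")
      case True
      then show ?thesis using Suc.IH by (simp add: w_def add.assoc)
    next
      case False
      then have "p dvd (p ^ m choose j)"
        using prime_dvd_choose_pow[OF assms(1)] j assms(3) by auto
      then show ?thesis by simp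
    qed
  qed
  finally show ?case .
qed

lemma prod_choose_int:
  "(\<Prod>j<s. int w - int j) = int (fact s * (w choose s))"
proof -
  have "(of_int (\<Prod>j<s. int w - int j) :: rat) = (\<Prod>j = 0..<s. of_nat w - of_nat j)"
    by (simp add: atLeast0LessThan)
  also have "\<dots> = fact s * (of_nat w gchoose s)" by (simp add: gbinomial_mult_fact)
  also have "\<dots> = of_int (int (fact s * (w choose s)))" by (simp add: binomial_gbinomial)
  finally show ?thesis by (simp only: of_int_eq_iff)
qed



lemma SC:
  fixes p m i0 s :: nat and d' u :: int
  assumes p: "prime p" and nd: "\<not> int p dvd d'" and cu: "int p ^ m dvd u - int i0 * d'"
    and i0: "i0 < s" and sm: "s < p ^ m"
  shows "int p ^ (multiplicity p (fact s :: nat) + 1) dvd (\<Prod>j<s. u - int j * d')"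
proof -
  define P where "P = int p"
  define N where "N = multiplicity p (fact s :: nat) + 1"
  define M where "M = N + m"
  have pP: "prime P" using p by (simp add: P_def)
  have P0: "P > 0" using p P_def prime_gt_0_nat by auto
  have "coprime P d'" using pP nd by (simp add: P_def prime_imp_coprime)
  then have "coprime d' (P ^ M)" by (simp add: coprime_commute)
  then obtain iv where iv: "[d' * iv = 1] (mod P ^ M)" using cong_solve_coprime_int by blast
  define w where "w = nat ((u * iv) mod P ^ M)"
  have wi: "int w = (u * iv) mod P ^ M" unfolding w_def using P0 by simp
  have w1: "[int w = u * iv] (mod P ^ M)" unfolding wi by (simp add: cong_def)
  have w2: "[d' * int w = u] (mod P ^ M)"
  proof -
    have "[d' * int w = d' * (u * iv)] (mod P ^ M)" using w1 by (simp add: cong_mult)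
    moreover have "[d' * (u * iv) = u * 1] (mod P ^ M)"
      using cong_mult[OF cong_refl[of u] iv] by (simp add: algebra_simps)
    ultimately show ?thesis by (metis cong_trans mult_1_right)
  qed
  have dm: "P ^ m dvd P ^ M" by (simp add: M_def le_imp_power_dvd)
  have w3: "[int w = int i0] (mod P ^ m)"
  proof -
    have a: "[int w = u * iv] (mod P ^ m)" using w1 dm cong_dvd_modulus by blast
    have b: "[u = int i0 * d'] (mod P ^ m)" using cu by (simp add: P_def cong_iff_dvd_diff)
    have c: "[d' * iv = 1] (mod P ^ m)" using iv dm cong_dvd_modulus by blast
    have "[u * iv = int i0 * d' * iv] (mod P ^ m)" using b by (simp add: cong_mult)
    moreover have "[int i0 * (d' * iv) = int i0 * 1] (mod P ^ m)" using cong_mult[OF cong_refl[of "int i0"] c] .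
    ultimately have "[u * iv = int i0] (mod P ^ m)" by (metis (no_types) mult.assoc mult_1_right cong_trans)
    then show ?thesis using a cong_trans by blast
  qed
  then have "[w = i0] (mod p ^ m)" unfolding P_def by (metis cong_int_iff of_nat_power)
  then have "w mod p ^ m = i0" using i0 sm by (simp add: cong_def)
  then have wdec: "w = p ^ m * (w div p ^ m) + i0" by (metis div_mult_mod_eq mult.commute)
  have pc: "p dvd (w choose s)"
    using prime_dvd_choose_shift[OF p i0 sm, of "w div p ^ m"] wdec by simp
  have "p ^ (N - 1) dvd (fact s :: nat)" unfolding N_def by (simp add: multiplicity_dvd)
  then have "p ^ (N - 1) * p dvd fact s * (w choose s)" using pc by (simp add: mult_dvd_mono)
  then have "p ^ N dvd fact s * (w choose s)" unfolding N_def by (simp add: mult.commute)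
  then have dv: "P ^ N dvd int (fact s * (w choose s))" unfolding P_def
    by (metis of_nat_dvd_iff of_nat_power)
  have "[(\<Prod>j<s. u - int j * d') = (\<Prod>j<s. d' * int w - int j * d')] (mod P ^ M)"
    by (rule cong_prod) (use w2 in \<open>auto intro: cong_diff cong_sym\<close>)
  also have "(\<Prod>j<s. d' * int w - int j * d') = (\<Prod>j<s. d' * (int w - int j))"
    by (simp add: algebra_simps)
  also have "\<dots> = d' ^ s * (\<Prod>j<s. int w - int j)" by (simp add: prod.distrib)
  also have "\<dots> = d' ^ s * int (fact s * (w choose s))" by (simp add: prod_choose_int)
  finally have cg: "[(\<Prod>j<s. u - int j * d') = d' ^ s * int (fact s * (w choose s))] (mod P ^ M)" .
  have "P ^ N dvd P ^ M" by (simp add: M_def le_imp_power_dvd)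
  then have "[(\<Prod>j<s. u - int j * d') = d' ^ s * int (fact s * (w choose s))] (mod P ^ N)"
    using cg cong_dvd_modulus by blast
  moreover have "P ^ N dvd d' ^ s * int (fact s * (w choose s))" using dv by simp
  ultimately have "P ^ N dvd (\<Prod>j<s. u - int j * d')"
    using cong_dvd_iff by blast
  then show ?thesis by (simp add: P_def N_def)
qed



lemma pow_dvd_prod_const:
  fixes c :: int
  assumes "finite A" "\<And>j. j \<in> A \<Longrightarrow> c dvd f j"
  shows "c ^ card A dvd prod f A"
proof -
  have "prod (\<lambda>_. c) A dvd prod f A" using assms by (intro prod_dvd_prod) auto
  then show ?thesis by simp
qed

lemma key:
  fixes p k a d s q y i0 V :: nat
  assumes p: "prime p" and k: "k \<ge> 1" and q: "q = p ^ k" and a: "a > 0" and d: "d > 0"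
    and s: "s \<ge> 1"
    and Lb: "\<And>i. i < s \<Longrightarrow> a + i * d \<le> q - 1"
    and V: "V = (\<Sum>i<s. multiplicity p (a + i * d))"
    and hyp: "V < max ((s - 1) * multiplicity p d + multiplicity p q)
               (s * multiplicity p d + multiplicity p (fact s) + 1)"
    and i0: "i0 < s" and cy: "[y = a + i0 * d] (mod q)"
  shows "int p ^ (V + 1) dvd (\<Prod>j<s. int y - int a - int j * int d)"
proof -
  define P where "P = int p"
  define e where "e = multiplicity p d"
  define x where "x = int y - int a"
  have p1: "p > 1" using p prime_gt_1_nat by blast
  have mq: "multiplicity p q = k" using p q by simp
  have prodx: "(\<Prod>j<s. int y - int a - int j * int d) = (\<Prod>j<s. x - int j * int d)"
    by (simp add: x_def)
  have "[int y = int a + int i0 * int d] (mod int q)" using cy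
    by (metis cong_int_iff of_nat_add of_nat_mult)
  then have cx: "P ^ k dvd x - int i0 * int d"
    by (simp add: P_def x_def q cong_iff_dvd_diff algebra_simps)
  obtain d' where dd: "d = p ^ e * d'" and nd: "\<not> p dvd d'"
    using multiplicity_decompose'[of d p] d p1 unfolding e_def by auto
  have ed: "p ^ e \<le> d" using dd d by (simp add: dvd_imp_le)
  have qpos: "q > 0" using q p1 by simp
  show ?thesis
  proof (cases "s = 1")
    case True
    then have i00: "i0 = 0" using i0 by simp
    have "a \<le> q - 1" using Lb[of 0] True by simp
    then have "a < p ^ k" using qpos q by linarith
    then have "\<not> p ^ k dvd a" using a by (auto dest: dvd_imp_le)
    then have "multiplicity p a < k" using a p1 by (intro multiplicity_lessI) auto
    then have "V + 1 \<le> k" using V True by simp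
    then have "P ^ (V + 1) dvd P ^ k" by (rule le_imp_power_dvd)
    then have "P ^ (V + 1) dvd x" using cx i00 by (simp add: dvd_trans)
    then show ?thesis using True prodx by (simp add: P_def)
  next
    case False
    then have s2: "s \<ge> 2" using s by simp
    have "a + 1 * d \<le> q - 1" using Lb[of 1] s2 by simp
    then have "p ^ e < p ^ k" using ed a q by linarith
    then have ek: "e < k" using p1 power_less_imp_less_exp by blast
    have Pe_dvd_d: "P ^ e dvd int d" unfolding P_def dd by simp
    have "P ^ e dvd P ^ k" by (rule le_imp_power_dvd) (use ek in simp)
    then have "P ^ e dvd x - int i0 * int d" using cx dvd_trans by blast
    then have Pex: "P ^ e dvd x"
      using Pe_dvd_d by (metis dvd_add dvd_mult diff_add_cancel)
    have W1: "P ^ ((s - 1) * e + k) dvd (\<Prod>j<s. x - int j * int d)"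
    proof -
      have "(\<Prod>j<s. x - int j * int d) = (x - int i0 * int d) * (\<Prod>j\<in>{..<s} - {i0}. x - int j * int d)"
        using i0 by (simp add: prod.remove)
      moreover have "(P ^ e) ^ card ({..<s} - {i0}) dvd (\<Prod>j\<in>{..<s} - {i0}. x - int j * int d)"
        by (rule pow_dvd_prod_const) (use Pex Pe_dvd_d in auto)
      moreover have "card ({..<s} - {i0}) = s - 1" using i0 by simp
      ultimately have "P ^ k * (P ^ e) ^ (s - 1) dvd (\<Prod>j<s. x - int j * int d)"
        using cx by (metis mult_dvd_mono)
      then show ?thesis by (simp add: power_mult power_add mult.commute)
    qed
    show ?thesis
    proof (cases "V < (s - 1) * e + k")
      case True
      then have "P ^ (V + 1) dvd P ^ ((s - 1) * e + k)" by (intro le_imp_power_dvd) simp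
      then show ?thesis using W1 prodx P_def dvd_trans by metis
    next
      case False
      then have hV: "V < s * e + multiplicity p (fact s) + 1" using hyp mq e_def by simp
      define m where "m = k - e"
      have km: "p ^ k = p ^ e * p ^ m" using ek by (simp add: m_def flip: power_add)
      have "a + (s - 1) * d \<le> q - 1" using Lb[of "s - 1"] s by simp
      moreover have "(s - 1) * p ^ e \<le> (s - 1) * d" using ed by simp
      ultimately have bnd: "(s - 1) * p ^ e + a \<le> p ^ e * p ^ m - 1" using q km by linarith
      have sle: "s \<le> p ^ m"
      proof (rule ccontr)
        assume "\<not> s \<le> p ^ m"
        then have "p ^ m \<le> s - 1" by simp
        then have "p ^ m * p ^ e \<le> (s - 1) * p ^ e" by (rule mult_right_mono) simp
        then have "p ^ e * p ^ m \<le> (s - 1) * p ^ e" by (simp add: mult.commute)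
        then show False using bnd a by linarith
      qed
      have sneq: "s \<noteq> p ^ m"
      proof
        assume sm: "s = p ^ m"
        have pm1: "p ^ m \<ge> 1" using p1 by simp
        have "(p ^ m - 1) * p ^ e + p ^ e = p ^ e * p ^ m"
          using pm1 by (metis le_add_diff_inverse2 mult.commute mult_Suc Suc_eq_plus1 add.commute)
        moreover have "(p ^ m - 1) * p ^ e + a \<le> p ^ e * p ^ m - 1" using bnd sm by simp
        ultimately have ape: "a < p ^ e" using a by linarith
        have lt: "multiplicity p (a + i * d) < e" if "i < s" for i
        proof -
          have "\<not> p ^ e dvd a + i * d"
          proof
            assume "p ^ e dvd a + i * d"
            moreover have "p ^ e dvd i * d" using dd by simp
            ultimately have "p ^ e dvd a" by (simp add: dvd_add_left_iff)
            then show False using ape a by (simp add: dvd_imp_le leD)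
          qed
          then show ?thesis using a p1 by (intro multiplicity_lessI) auto
        qed
        have "V < (\<Sum>i<s. e)" unfolding V using s lt by (intro sum_strict_mono) (auto simp: lessThan_empty_iff)
        then have "V < s * e" by simp
        also have "s * e \<le> (s - 1) * e + k" using ek s by (cases s) auto
        finally show False using False by simp
      qed
      have slt: "s < p ^ m" using sle sneq by simp
      define u where "u = x div P ^ e"
      have xu: "x = P ^ e * u" using Pex by (simp add: u_def)
      have dd': "int d = P ^ e * int d'" by (simp add: dd P_def)
      have "P ^ k dvd P ^ e * (u - int i0 * int d')" using cx xu dd' by (simp add: algebra_simps)
      then have "P ^ e * P ^ m dvd P ^ e * (u - int i0 * int d')" using km P_def by (metis of_nat_mult of_nat_power)
      then have cu: "P ^ m dvd u - int i0 * int d'" using p1 P_def by (subst (asm) dvd_mult_cancel_left) auto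
      have "\<not> int p dvd int d'" using nd by simp
      from SC[OF p this _ i0 slt, of u] cu
      have S: "P ^ (multiplicity p (fact s :: nat) + 1) dvd (\<Prod>j<s. u - int j * int d')" by (simp add: P_def)
      have "(\<Prod>j<s. x - int j * int d) = (\<Prod>j<s. P ^ e * (u - int j * int d'))"
        by (simp add: xu dd' algebra_simps)
      also have "\<dots> = (P ^ e) ^ s * (\<Prod>j<s. u - int j * int d')" by (simp add: prod.distrib)
      finally have eqp: "(\<Prod>j<s. x - int j * int d) = P ^ (s * e) * (\<Prod>j<s. u - int j * int d')"
        by (simp add: power_mult mult.commute)
      have "P ^ (s * e) * P ^ (multiplicity p (fact s :: nat) + 1) dvd (\<Prod>j<s. x - int j * int d)"
        unfolding eqp using S by simp
      then have "P ^ (s * e + multiplicity p (fact s :: nat) + 1) dvd (\<Prod>j<s. x - int j * int d)"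
        by (simp add: power_add mult_ac)
      moreover have "P ^ (V + 1) dvd P ^ (s * e + multiplicity p (fact s :: nat) + 1)"
        by (rule le_imp_power_dvd) (use hV in simp)
      ultimately show ?thesis using prodx P_def dvd_trans by metis
    qed
  qed
qed



definition sc :: "rat \<Rightarrow> (nat set \<Rightarrow> rat) \<Rightarrow> (nat set \<Rightarrow> rat)" where
  "sc c f = (\<lambda>x. c * f x)"

interpretation VS: vector_space sc
  by unfold_locales (auto simp: sc_def fun_eq_iff algebra_simps)

definition chi :: "nat set \<Rightarrow> nat set \<Rightarrow> rat" where
  "chi S = (\<lambda>B. if S \<subseteq> B then 1 else 0)"

definition Tset :: "nat \<Rightarrow> nat \<Rightarrow> (nat set \<Rightarrow> rat) set" where
  "Tset n r = chi ` {S. S \<subseteq> {1..n} \<and> card S \<le> r}"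

lemma sum_fun_apply: "(sum f A) x = (\<Sum>a\<in>A. f a x)"
  for f :: "'b \<Rightarrow> 'c \<Rightarrow> 'd::comm_monoid_add"
  by (induction A rule: infinite_finite_induct) auto

lemma card_diff_sum:
  assumes "finite A"
  shows "(of_nat (card (A - B)) :: rat) = (\<Sum>x\<in>A. 1 - (if x \<in> B then 1 else 0))"
  using assms
proof (induction A rule: finite_induct)
  case empty then show ?case by simp
next
  case (insert x A)
  then show ?case
    by (cases "x \<in> B") (auto simp: insert_Diff_if)
qed

lemma Tset_mono: "r \<le> r' \<Longrightarrow> Tset n r \<subseteq> Tset n r'"
  unfolding Tset_def by auto

lemma mult_step:
  assumes A: "A \<subseteq> {1..n}" and h: "h \<in> VS.span (Tset n r)"
  shows "(\<lambda>B. h B * (of_nat (card (A - B)) - c)) \<in> VS.span (Tset n (Suc r))"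
  using h
proof (induction rule: VS.span_induct_alt)
  case base
  have "(\<lambda>B. (0 :: nat set \<Rightarrow> rat) B * (of_nat (card (A - B)) - c)) = 0" by (simp add: fun_eq_iff)
  then show ?case by (simp add: VS.span_zero)
next
  case (step c' x y)
  from step.hyps(1) obtain S where S: "S \<subseteq> {1..n}" "card S \<le> r" and xS: "x = chi S"
    unfolding Tset_def by auto
  have finA: "finite A" using A finite_subset by blast
  have finS: "finite S" using S finite_subset by blast
  have eqx: "(\<lambda>B. x B * (of_nat (card (A - B)) - c)) =
        (\<Sum>z\<in>A. chi S - chi (insert z S)) - sc c (chi S)"
  proof (rule ext)
    fix B
    have "x B * (of_nat (card (A - B)) - c) = (\<Sum>z\<in>A. chi S B * (1 - (if z \<in> B then 1 else 0))) - c * chi S B"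
      unfolding xS card_diff_sum[OF finA] by (simp add: sum_distrib_left algebra_simps)
    also have "\<dots> = (\<Sum>z\<in>A. chi S B - chi (insert z S) B) - c * chi S B"
      by (intro arg_cong2[where f="(-)"] sum.cong refl) (auto simp: chi_def)
    finally show "x B * (of_nat (card (A - B)) - c) = ((\<Sum>z\<in>A. chi S - chi (insert z S)) - sc c (chi S)) B"
      by (simp add: sum_fun_apply sc_def)
  qed
  have inS: "chi S \<in> Tset n (Suc r)" using S unfolding Tset_def by auto
  have inZ: "chi (insert z S) \<in> Tset n (Suc r)" if "z \<in> A" for z
  proof -
    have "card (insert z S) \<le> Suc r" using S finS by (simp add: card_insert_if)
    then show ?thesis using S A that unfolding Tset_def by auto
  qed
  have xin: "(\<lambda>B. x B * (of_nat (card (A - B)) - c)) \<in> VS.span (Tset n (Suc r))"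
    unfolding eqx
    by (intro VS.span_diff VS.span_sum VS.span_scale VS.span_base inS inZ)
  have "(\<lambda>B. (sc c' x + y) B * (of_nat (card (A - B)) - c)) =
        sc c' (\<lambda>B. x B * (of_nat (card (A - B)) - c)) + (\<lambda>B. y B * (of_nat (card (A - B)) - c))"
    by (simp add: fun_eq_iff sc_def algebra_simps)
  then show ?case using xin step.IH by (simp add: VS.span_add VS.span_scale)
qed

lemma prod_span:
  assumes A: "A \<subseteq> {1..n}"
  shows "(\<lambda>B. \<Prod>j<r. (of_nat (card (A - B)) - \<beta> j)) \<in> VS.span (Tset n r)"
proof (induction r)
  case 0
  have "(\<lambda>B. \<Prod>j<0. (of_nat (card (A - B)) - \<beta> j)) = chi {}" by (simp add: chi_def fun_eq_iff)
  moreover have "chi {} \<in> Tset n 0" unfolding Tset_def by auto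
  ultimately show ?case by (simp add: VS.span_base)
next
  case (Suc r)
  have "(\<lambda>B. \<Prod>j<Suc r. (of_nat (card (A - B)) - \<beta> j)) =
        (\<lambda>B. (\<Prod>j<r. (of_nat (card (A - B)) - \<beta> j)) * (of_nat (card (A - B)) - \<beta> r))"
    by (simp add: fun_eq_iff)
  then show ?case using mult_step[OF A Suc.IH] by simp
qed

lemma card_Tset: "card (Tset n s) \<le> (\<Sum>i\<le>s. n choose i)"
proof -
  have "card (Tset n s) \<le> card {S. S \<subseteq> {1..n} \<and> card S \<le> s}"
    unfolding Tset_def by (rule card_image_le) simp
  also have "{S. S \<subseteq> {1..n} \<and> card S \<le> s} = (\<Union>i\<le>s. {S. S \<subseteq> {1..n} \<and> card S = i})" by auto
  also have "card \<dots> \<le> (\<Sum>i\<le>s. card {S. S \<subseteq> {1..n} \<and> card S = i})" by (rule card_UN_le) simp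
  also have "\<dots> = (\<Sum>i\<le>s. n choose i)" by (simp add: n_subsets)
  finally show ?thesis .
qed

lemma finite_Tset: "finite (Tset n s)"
  unfolding Tset_def by simp

lemma indep:
  fixes g :: "nat set \<Rightarrow> nat set \<Rightarrow> rat" and F :: "nat set set"
  assumes fin: "finite F" and inj: "inj_on g F"
    and coef: "\<And>c. (\<forall>B\<in>F. (\<Sum>A\<in>F. c A * g A B) = 0) \<Longrightarrow> (\<forall>A\<in>F. c A = 0)"
  shows "VS.independent (g ` F)"
  unfolding VS.independent_explicit_finite_subsets
proof (intro allI impI ballI)
  fix S u v
  assume SF: "S \<subseteq> g ` F" and finS: "finite S" and su: "(\<Sum>v\<in>S. sc (u v) v) = 0" and vS: "v \<in> S"
  define F1 where "F1 = {A\<in>F. g A \<in> S}"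
  have S1: "S = g ` F1" using SF unfolding F1_def by auto
  have inj1: "inj_on g F1" using inj unfolding F1_def by (auto intro: inj_on_subset)
  define c where "c A = (if g A \<in> S then u (g A) else 0)" for A
  have "\<forall>B\<in>F. (\<Sum>A\<in>F. c A * g A B) = 0"
  proof
    fix B assume "B \<in> F"
    have "(\<Sum>A\<in>F. c A * g A B) = (\<Sum>A\<in>F1. u (g A) * g A B)"
    proof -
      have "(\<Sum>A\<in>F. c A * g A B) = (\<Sum>A\<in>F. if g A \<in> S then u (g A) * g A B else 0)"
        by (rule sum.cong) (auto simp: c_def)
      also have "\<dots> = (\<Sum>A\<in>F1. u (g A) * g A B)"
        unfolding F1_def using fin by (simp add: sum.inter_filter)
      finally show ?thesis .
    qed
    also have "\<dots> = (\<Sum>w\<in>S. u w * w B)" unfolding S1 using inj1 by (simp add: sum.reindex)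
    also have "\<dots> = (\<Sum>w\<in>S. sc (u w) w) B" by (simp add: sum_fun_apply sc_def)
    also have "\<dots> = 0" using su by simp
    finally show "(\<Sum>A\<in>F. c A * g A B) = 0" .
  qed
  then have c0: "\<forall>A\<in>F. c A = 0" by (rule coef)
  from vS S1 obtain A where "A \<in> F1" "v = g A" by auto
  then show "u v = 0" using c0 unfolding c_def F1_def by auto
qed



lemma int_coef:
  fixes G :: "nat set \<Rightarrow> nat set \<Rightarrow> int" and P :: int and V :: nat and F :: "nat set set"
  assumes fin: "finite F" and pP: "prime P"
    and off: "\<And>A B. A \<in> F \<Longrightarrow> B \<in> F \<Longrightarrow> A \<noteq> B \<Longrightarrow> P ^ (V + 1) dvd G A B"
    and diag: "\<And>A. A \<in> F \<Longrightarrow> \<exists>r. G A A = P ^ V * r \<and> \<not> P dvd r"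
  shows "\<And>c. \<forall>B\<in>F. (\<Sum>A\<in>F. c A * G A B) = 0 \<Longrightarrow> \<forall>A\<in>F. c A = 0"
proof -
  have P0: "P \<noteq> 0" using pP by auto
  have step1: "\<forall>A\<in>F. P dvd c A" if h: "\<forall>B\<in>F. (\<Sum>A\<in>F. c A * G A B) = 0" for c
  proof
    fix A0 assume A0: "A0 \<in> F"
    have "(\<Sum>A\<in>F. c A * G A A0) = c A0 * G A0 A0 + (\<Sum>A\<in>F - {A0}. c A * G A A0)"
      using fin A0 by (simp add: sum.remove)
    moreover have "P ^ (V + 1) dvd (\<Sum>A\<in>F - {A0}. c A * G A A0)"
      using off A0 by (intro dvd_sum) auto
    moreover have "(\<Sum>A\<in>F. c A * G A A0) = 0" using h A0 by blast
    ultimately have "c A0 * G A0 A0 = - (\<Sum>A\<in>F - {A0}. c A * G A A0)" "P ^ (V + 1) dvd (\<Sum>A\<in>F - {A0}. c A * G A A0)"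
      by linarith+
    then have "P ^ (V + 1) dvd c A0 * G A0 A0" by simp
    moreover obtain r where r: "G A0 A0 = P ^ V * r" "\<not> P dvd r" using diag A0 by blast
    ultimately have "P ^ V * P dvd P ^ V * (c A0 * r)" by (simp add: algebra_simps)
    then have "P dvd c A0 * r" using P0 by simp
    then show "P dvd c A0" using r(2) pP prime_dvd_mult_iff by blast
  qed
  have step2: "\<forall>A\<in>F. P ^ K dvd c A" if "\<forall>B\<in>F. (\<Sum>A\<in>F. c A * G A B) = 0" for K c
    using that
  proof (induction K arbitrary: c)
    case 0 then show ?case by simp
  next
    case (Suc K)
    define c' where "c' A = c A div P" for A
    have cc: "c A = P * c' A" if "A \<in> F" for A
      using step1[OF Suc.prems] that by (simp add: c'_def)
    have "\<forall>B\<in>F. (\<Sum>A\<in>F. c' A * G A B) = 0"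
    proof
      fix B assume B: "B \<in> F"
      have "P * (\<Sum>A\<in>F. c' A * G A B) = (\<Sum>A\<in>F. c A * G A B)"
        by (simp add: sum_distrib_left cc mult.assoc)
      then show "(\<Sum>A\<in>F. c' A * G A B) = 0" using Suc.prems B P0 by simp
    qed
    then have "\<forall>A\<in>F. P ^ K dvd c' A" by (rule Suc.IH)
    then show ?case using cc by (simp add: mult_dvd_mono)
  qed
  fix c assume h: "\<forall>B\<in>F. (\<Sum>A\<in>F. c A * G A B) = 0"
  show "\<forall>A\<in>F. c A = 0"
  proof (rule ballI, rule ccontr)
    fix A assume A: "A \<in> F" and nz: "c A \<noteq> 0"
    define m where "m = nat \<bar>c A\<bar>"
    have "P ^ m dvd c A" using step2[OF h] A by blast
    then have le: "\<bar>P ^ m\<bar> \<le> \<bar>c A\<bar>" using nz by (rule dvd_imp_le_int[rotated])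
    have P2: "\<bar>P\<bar> \<ge> 2" using prime_ge_2_int[OF pP] by simp
    have "(2::int) ^ m \<le> \<bar>P\<bar> ^ m" using P2 by (intro power_mono) auto
    moreover have "m < 2 ^ m" by (rule less_exp)
    then have "int m < 2 ^ m" by (simp add: of_nat_less_iff)
    moreover have "\<bar>P ^ m\<bar> = \<bar>P\<bar> ^ m" by (simp add: power_abs)
    moreover have "\<bar>c A\<bar> = int m" by (simp add: m_def)
    ultimately show False using le by linarith
  qed
qed

lemma rat_coef:
  fixes G :: "nat set \<Rightarrow> nat set \<Rightarrow> int" and F :: "nat set set" and c :: "nat set \<Rightarrow> rat"
  assumes fin: "finite F"
    and ic: "\<And>c. \<forall>B\<in>F. (\<Sum>A\<in>F. c A * G A B) = 0 \<Longrightarrow> \<forall>A\<in>F. c A = 0"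
    and h: "\<forall>B\<in>F. (\<Sum>A\<in>F. c A * of_int (G A B)) = 0"
  shows "\<forall>A\<in>F. c A = 0"
proof -
  define den where "den A = snd (quotient_of (c A))" for A
  define num where "num A = fst (quotient_of (c A))" for A
  define D where "D = (\<Prod>A\<in>F. den A)"
  have denpos: "den A > 0" for A unfolding den_def by (rule quotient_of_denom_pos')
  have Dpos: "D > 0" unfolding D_def using denpos by (simp add: prod_pos)
  have cA: "c A = of_int (num A) / of_int (den A)" for A
    unfolding num_def den_def by (rule quotient_of_div) simp
  define ci where "ci A = num A * (D div den A)" for A
  have ci: "of_int (ci A) = of_int D * c A" if "A \<in> F" for A
  proof -
    have "den A dvd D" unfolding D_def using fin that by auto
    then have "D div den A * den A = D" by simp
    then have "(of_int (D div den A) :: rat) * of_int (den A) = of_int D"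
      by (metis of_int_mult)
    then have "(of_int (D div den A) :: rat) = of_int D / of_int (den A)"
      using denpos[of A] by (simp add: eq_divide_eq)
    then show ?thesis unfolding ci_def cA by simp
  qed
  have "\<forall>B\<in>F. (\<Sum>A\<in>F. ci A * G A B) = 0"
  proof
    fix B assume B: "B \<in> F"
    have "(of_int (\<Sum>A\<in>F. ci A * G A B) :: rat) = (\<Sum>A\<in>F. of_int D * c A * of_int (G A B))"
      by (simp add: ci)
    also have "\<dots> = of_int D * (\<Sum>A\<in>F. c A * of_int (G A B))"
      by (simp add: sum_distrib_left mult.assoc)
    also have "\<dots> = 0" using h B by simp
    finally show "(\<Sum>A\<in>F. ci A * G A B) = 0" by (simp only: of_int_eq_0_iff)
  qed
  then have "\<forall>A\<in>F. ci A = 0" by (rule ic)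
  note ci0 = this
  show ?thesis
  proof
    fix A assume A: "A \<in> F"
    have "(of_int D :: rat) * c A = 0" using ci[OF A] \<open>\<forall>A\<in>F. ci A = 0\<close> A by simp
    then show "c A = 0" using Dpos by simp
  qed
qed



theorem mainTheorem3:
  fixes p q k a d s n :: nat and F :: "nat set set"
  assumes "prime p" and "k \<ge> 1" and "q = p ^ k"
    and "a > 0" and "d > 0" and "s \<ge> 1"
    and "L = {a + i * d | i. i < s}"
    and "L \<subseteq> {1..q - 1}"
    and "modular_L_differencing_sperner n q L F"
    and "(\<Sum>l\<in>L. multiplicity p l) <
           max ((s - 1) * multiplicity p d + multiplicity p q)
               (s * multiplicity p d + multiplicity p (fact s) + 1)"
  shows "card F \<le> (\<Sum>i\<le>s. n choose i)"
proof -
  note p = assms(1) and k = assms(2) and q = assms(3) and a = assms(4) and d = assms(5)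
    and s = assms(6) and Ldef = assms(7) and Lq = assms(8) and sp = assms(9) and hyp0 = assms(10)
  define P where "P = int p"
  define V where "V = (\<Sum>i<s. multiplicity p (a + i * d))"
  have p1: "p > 1" using p prime_gt_1_nat by blast
  have Leq: "L = (\<lambda>i. a + i * d) ` {..<s}" using Ldef by auto
  have injL: "inj_on (\<lambda>i. a + i * d) {..<s}" using d by (intro inj_onI) simp
  have sumL: "(\<Sum>l\<in>L. multiplicity p l) = V"
    unfolding Leq V_def using injL by (simp add: sum.reindex)
  have hyp: "V < max ((s - 1) * multiplicity p d + multiplicity p q)
               (s * multiplicity p d + multiplicity p (fact s) + 1)" using hyp0 sumL by simp
  have Lb: "a + i * d \<le> q - 1" if "i < s" for i
    using Lq that unfolding Leq by auto
  have FP: "F \<subseteq> Pow {1..n}" and pairs: "\<And>A B. A \<in> F \<Longrightarrow> B \<in> F \<Longrightarrow> A \<noteq> B \<Longrightarrow> in_mod (card (A - B)) L q"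
    using sp unfolding modular_L_differencing_sperner_def by auto
  have finF: "finite F" using FP by (rule finite_subset) simp
  define G :: "nat set \<Rightarrow> nat set \<Rightarrow> int" where "G A B = (\<Prod>j<s. int (card (A - B)) - int a - int j * int d)" for A B
  have off: "P ^ (V + 1) dvd G A B" if "A \<in> F" "B \<in> F" "A \<noteq> B" for A B
  proof -
    from pairs[OF that] obtain l where "l \<in> L" "[card (A - B) = l] (mod q)"
      unfolding in_mod_def by blast
    then obtain i0 where i0: "i0 < s" "[card (A - B) = a + i0 * d] (mod q)" unfolding Leq by auto
    show ?thesis unfolding P_def G_def
      by (rule key[OF p k q a d s Lb V_def hyp i0]) auto
  qed
  define Nn where "Nn = (\<Prod>j<s. a + j * d)"
  have Nn0: "Nn \<noteq> 0" unfolding Nn_def using a by simp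
  have mNn: "multiplicity p Nn = V" unfolding Nn_def V_def
    using p a by (subst prime_elem_multiplicity_prod_distrib) auto
  obtain r' where r': "Nn = p ^ V * r'" "\<not> p dvd r'"
    using multiplicity_decompose'[of Nn p] Nn0 p1 mNn by auto
  have diag: "\<exists>r. G A A = P ^ V * r \<and> \<not> P dvd r" for A
  proof (intro exI conjI)
    have "G A A = (\<Prod>j<s. (-1) * (int a + int j * int d))" unfolding G_def by (simp add: algebra_simps)
    also have "\<dots> = (\<Prod>j<s. (-1::int)) * (\<Prod>j<s. int a + int j * int d)" by (rule prod.distrib)
    also have "\<dots> = (-1) ^ s * int Nn" unfolding Nn_def by simp
    also have "\<dots> = P ^ V * ((-1) ^ s * int r')" unfolding r' P_def by simp
    finally show "G A A = P ^ V * ((-1) ^ s * int r')" .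
    show "\<not> P dvd (-1) ^ s * int r'"
    proof
      assume "P dvd (-1) ^ s * int r'"
      then have "P dvd int r'" by (cases "even s") auto
      then show False using r'(2) unfolding P_def by simp
    qed
  qed
  have pP: "prime P" using p unfolding P_def by simp

  define g where "g A = (\<lambda>B. (of_int (G A B) :: rat))" for A
  have injg: "inj_on g F"
  proof (rule inj_onI, rule ccontr)
    fix A B assume A: "A \<in> F" and B: "B \<in> F" and eq: "g A = g B" and ne: "A \<noteq> B"
    have "G A A = G B A" using fun_cong[OF eq, of A] unfolding g_def by simp
    moreover have "P ^ (V + 1) dvd G B A" using off[OF B A] ne by simp
    moreover obtain r where "G A A = P ^ V * r" "\<not> P dvd r" using diag by blast
    ultimately have "P ^ V * P dvd P ^ V * r" by (simp add: mult.commute)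
    then have "P dvd r" using pP by (simp add: prime_gt_0_int)
    then show False using \<open>\<not> P dvd r\<close> by simp
  qed
  have ind: "VS.independent (g ` F)"
  proof (rule indep[OF finF injg])
    fix c :: "nat set \<Rightarrow> rat"
    assume "\<forall>B\<in>F. (\<Sum>A\<in>F. c A * g A B) = 0"
    then have "\<forall>B\<in>F. (\<Sum>A\<in>F. c A * of_int (G A B)) = 0" unfolding g_def by simp
    note h = this
    have icc: "\<forall>A\<in>F. c' A = 0" if "\<forall>B\<in>F. (\<Sum>A\<in>F. c' A * G A B) = 0" for c'
      by (rule int_coef[where F=F and P=P and V=V and G=G]) (use finF pP off diag that in auto)
    show "\<forall>A\<in>F. c A = 0" using rat_coef[of F G c, OF finF icc h] .
  qed
  have sub: "g ` F \<subseteq> VS.span (Tset n s)"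
  proof
    fix v assume "v \<in> g ` F"
    then obtain A where A: "A \<in> F" "v = g A" by auto
    have "g A = (\<lambda>B. \<Prod>j<s. (of_nat (card (A - B)) - (of_nat a + of_nat j * of_nat d)))"
      unfolding g_def G_def by (simp add: fun_eq_iff algebra_simps)
    moreover have "A \<subseteq> {1..n}" using A FP by auto
    ultimately show "v \<in> VS.span (Tset n s)" using prod_span A by simp
  qed
  have "card (g ` F) \<le> card (Tset n s)"
    using VS.independent_span_bound[OF finite_Tset ind sub] by simp
  moreover have "card (g ` F) = card F" using injg by (rule card_image)
  ultimately show ?thesis using card_Tset[of n s] by simp
qed

end
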